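(* Let $T$ be a compact metric space, let $\eta$ be a sample-continuous max-infinitely divisible process on $T$ with vertex function identically $0$ and exponent measure $\mu$, and let $\Phi=\sum_{i=1}^N\delta_{\phi_i}$ be a Poisson random measure on $\mathbb{C}_0$ with intensity $\mu$ with $\eta=\max(\Phi)$. Let $K\subset T$ be closed and $\Phi_K^+=\sum_{i=1}^N1_{\{\exists t\in K:\ \phi_i(t)\ge\eta(t)\}}\delta_{\phi_i}$ the $K$-extremal point measure. Then $\Phi_K^+$ is almost surely finite if and only if one of the following holds: (i) $\mu(\mathbb{C}_0)<+\infty$; (ii) $\mu(\mathbb{C}_0)=+\infty$ and $\inf_{t\in K}\eta(t)>0$ almost surely.
   Context: $\mathbb{C}_0$ is the set of continuous $f:T\to[0,\infty)$ not identically zero with the sup norm. The vertex function is $h(t)=\sup\{x:\mathbb P(\eta(t)\ge x)=1\}$; the exponent measure $\mu$ is a Borel measure on $\mathbb{C}_0$ with $\mu(\{f:\|f\|>\varepsilon\})<\infty$ for all $\varepsilon>0$, such that $\mathbb P[\eta(K_i)<x_i,1\le i\le n]=\exp[-\mu(\cup_i\{f: f(K_i)\ge x_i\})]$ ($f(A)=\sup_Af$). $\max(\Phi)(t)=\max\{\phi(t):\phi\text{ atom of }\Phi\}$, and $0$ if $\Phi=0$. *)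

theory Defs
  imports "HOL-Probability.Probability"
begin

text \<open>The space C_0 of continuous nonnegative functions on T (here the type 'a, a compact
  metric space) that are not identically zero, as a subset of the Banach space of
  bounded continuous functions with the sup norm.\<close>
definition C0 :: "('a::metric_space \<Rightarrow>\<^sub>C real) set" where
  "C0 = {f. (\<forall>t. 0 \<le> apply_bcontfun f t) \<and> f \<noteq> 0}"

text \<open>A point measure Phi = sum_{i < N} delta_{phi i} is represented by its number of atoms
  N (possibly infinite) and an enumeration phi of its atoms (with multiplicity).
  pm_count N phi A is Phi(A).\<close>
definition pm_count :: "enat \<Rightarrow> (nat \<Rightarrow> 'c) \<Rightarrow> 'c set \<Rightarrow> enat" where
  "pm_count N phi A =
     (if finite {i. enat i < N \<and> phi i \<in> A} then enat (card {i. enat i < N \<and> phi i \<in> A})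
      else \<infinity>)"

definition pm_max :: "enat \<Rightarrow> (nat \<Rightarrow> ('a::metric_space \<Rightarrow>\<^sub>C real)) \<Rightarrow> 'a \<Rightarrow> real" where
  "pm_max N phi t = (if N = 0 then 0 else Sup {apply_bcontfun (phi i) t | i. enat i < N})"

definition poisson_random_measure ::
  "'w measure \<Rightarrow> 'c measure \<Rightarrow> ('w \<Rightarrow> enat) \<Rightarrow> ('w \<Rightarrow> nat \<Rightarrow> 'c) \<Rightarrow> bool" where
  "poisson_random_measure M mu N phi \<longleftrightarrow>
     (\<forall>\<omega>\<in>space M. \<forall>i. enat i < N \<omega> \<longrightarrow> phi \<omega> i \<in> space mu) \<and>
     (\<forall>A\<in>sets mu. (\<lambda>\<omega>. pm_count (N \<omega>) (phi \<omega>) A) \<in> measurable M (count_space UNIV)) \<and>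
     (\<forall>A\<in>sets mu. emeasure mu A < \<infinity> \<longrightarrow>
        (\<forall>k::nat. measure M {\<omega>\<in>space M. pm_count (N \<omega>) (phi \<omega>) A = enat k}
            = enn2real (emeasure mu A) ^ k / fact k * exp (- enn2real (emeasure mu A)))) \<and>
     (\<forall>A\<in>sets mu. emeasure mu A = \<infinity> \<longrightarrow>
        (AE \<omega> in M. pm_count (N \<omega>) (phi \<omega>) A = \<infinity>)) \<and>
     (\<forall>(n::nat) A. (\<forall>i<n. A i \<in> sets mu) \<and> disjoint_family_on A {..<n} \<longrightarrow>
        prob_space.indep_vars M (\<lambda>_. count_space UNIV)
          (\<lambda>i \<omega>. pm_count (N \<omega>) (phi \<omega>) (A i)) {..<n})"

text \<open>mu is an exponent measure of the process eta: a Borel measure on C_0 with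
  mu({||f|| > eps}) finite for every eps > 0 and
  P[eta(K_i) < x_i, i < n] = exp(-mu(U_i {f. f(K_i) >= x_i})), f(A) = sup_A f.
  (Vertex function is 0, so the relation is required for x_i > 0 and nonempty closed,
  hence compact, K_i.)\<close>
definition exponent_measure ::
  "'w measure \<Rightarrow> ('w \<Rightarrow> 'a::metric_space \<Rightarrow> real) \<Rightarrow> ('a \<Rightarrow>\<^sub>C real) measure \<Rightarrow> bool" where
  "exponent_measure M \<eta> mu \<longleftrightarrow>
     space mu = C0 \<and> sets mu = sets (restrict_space borel C0) \<and>
     (\<forall>\<epsilon>>0. emeasure mu {f\<in>C0. norm f > \<epsilon>} < \<infinity>) \<and>
     (\<forall>(n::nat) (K::nat \<Rightarrow> 'a set) (x::nat \<Rightarrow> real).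
        (\<forall>i<n. closed (K i) \<and> K i \<noteq> {} \<and> 0 < x i) \<longrightarrow>
        measure M {\<omega>\<in>space M. \<forall>i<n. Sup (\<eta> \<omega> ` K i) < x i}
          = exp (- enn2real (emeasure mu (\<Union>i<n. {f\<in>C0. Sup (apply_bcontfun f ` K i) \<ge> x i}))))"

definition vertex :: "'w measure \<Rightarrow> ('w \<Rightarrow> 'a \<Rightarrow> real) \<Rightarrow> 'a \<Rightarrow> real" where
  "vertex M \<eta> t = Sup {x. measure M {\<omega>\<in>space M. \<eta> \<omega> t \<ge> x} = 1}"

end

theory Submission
  imports Defs
begin

lemma poisson_finite:
  assumes P: "prob_space M" and PR: "poisson_random_measure M mu N phi"
    and A: "A \<in> sets mu" and fin: "emeasure mu A < \<infinity>"
  shows "AE \<omega> in M. finite {i. enat i < N \<omega> \<and> phi \<omega> i \<in> A}"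
proof -
  interpret prob_space M by (rule P)
  define X where "X \<omega> = pm_count (N \<omega>) (phi \<omega>) A" for \<omega>
  define l where "l = enn2real (emeasure mu A)"
  have Xm: "X \<in> measurable M (count_space UNIV)"
    using PR A unfolding poisson_random_measure_def X_def by blast
  have pk: "\<And>k. measure M {\<omega>\<in>space M. X \<omega> = enat k} = l ^ k / fact k * exp (- l)"
    using PR A fin unfolding poisson_random_measure_def X_def l_def by blast
  define B where "B k = {\<omega>\<in>space M. X \<omega> = enat k}" for k
  have Bs: "range B \<subseteq> sets M"
  proof -
    { fix k have "B k = X -` {enat k} \<inter> space M" unfolding B_def by auto
      also have "\<dots> \<in> sets M" using Xm by (rule measurable_sets) auto
      finally have "B k \<in> sets M" . }
    then show ?thesis by auto
  qed
  have dj: "disjoint_family B" unfolding disjoint_family_on_def B_def by auto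
  have "(\<lambda>k. measure M (B k)) sums measure M (\<Union>k. B k)"
    by (rule measure_UNION[OF Bs dj]) (simp add: emeasure_eq_measure)
  moreover have "(\<lambda>k. measure M (B k)) sums (exp l * exp (- l))"
    unfolding B_def pk using sums_mult2[OF exp_converges[of l], of "exp (-l)"]
    by (simp add: divide_inverse mult.commute)
  ultimately have "measure M (\<Union>k. B k) = 1"
    using sums_unique2 by (fastforce simp: exp_minus)
  then have "AE \<omega> in M. \<omega> \<in> (\<Union>k. B k)" by (rule AE_prob_1)
  then show ?thesis
    by eventually_elim (auto simp: B_def X_def pm_count_def split: if_splits)
qed

theorem proposition1:
  fixes M :: "'w measure"
    and \<eta> :: "'w \<Rightarrow> 'a::metric_space \<Rightarrow> real"
    and \<mu> :: "('a \<Rightarrow>\<^sub>C real) measure"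
    and N :: "'w \<Rightarrow> enat"
    and \<phi> :: "'w \<Rightarrow> nat \<Rightarrow> ('a \<Rightarrow>\<^sub>C real)"
    and K :: "'a set"
  assumes "prob_space M"
    and "compact (UNIV :: 'a set)"
    and "\<And>t. (\<lambda>\<omega>. \<eta> \<omega> t) \<in> borel_measurable M"
    and "\<forall>\<omega>\<in>space M. continuous_on UNIV (\<eta> \<omega>)"
    and "\<forall>t. vertex M \<eta> t = 0"
    and "exponent_measure M \<eta> \<mu>"
    and "poisson_random_measure M \<mu> N \<phi>"
    and "AE \<omega> in M. \<eta> \<omega> = pm_max (N \<omega>) (\<phi> \<omega>)"
    and "closed K"
  shows "(AE \<omega> in M. finite {i. enat i < N \<omega> \<and>
                        (\<exists>t\<in>K. apply_bcontfun (\<phi> \<omega> i) t \<ge> \<eta> \<omega> t)})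
         \<longleftrightarrow> (emeasure \<mu> (space \<mu>) < \<infinity> \<or>
              (emeasure \<mu> (space \<mu>) = \<infinity> \<and>
               (AE \<omega> in M. Inf ((\<lambda>t. ereal (\<eta> \<omega> t)) ` K) > 0)))"
  proof -
  interpret prob_space M by (rule assms(1))
  have sp: "space \<mu> = C0" and ss: "sets \<mu> = sets (restrict_space borel C0)"
    and eps: "\<And>e. e > 0 \<Longrightarrow> emeasure \<mu> {f\<in>C0. norm f > e} < \<infinity>"
    using assms(6) unfolding exponent_measure_def by auto
  have inC0: "\<And>\<omega> i. \<omega> \<in> space M \<Longrightarrow> enat i < N \<omega> \<Longrightarrow> \<phi> \<omega> i \<in> C0"
    using assms(7) sp unfolding poisson_random_measure_def by auto
  have nonneg: "\<And>\<omega> i t. \<omega> \<in> space M \<Longrightarrow> enat i < N \<omega> \<Longrightarrow> 0 \<le> apply_bcontfun (\<phi> \<omega> i) t"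
    using inC0 unfolding C0_def by auto
  show ?thesis
  proof
    assume L: "AE \<omega> in M. finite {i. enat i < N \<omega> \<and>
                        (\<exists>t\<in>K. apply_bcontfun (\<phi> \<omega> i) t \<ge> \<eta> \<omega> t)}"
    show "emeasure \<mu> (space \<mu>) < \<infinity> \<or>
              (emeasure \<mu> (space \<mu>) = \<infinity> \<and>
               (AE \<omega> in M. Inf ((\<lambda>t. ereal (\<eta> \<omega> t)) ` K) > 0))"
    proof (cases "emeasure \<mu> (space \<mu>) < \<infinity>")
      case True then show ?thesis by simp
    next
      case False
      then have inf: "emeasure \<mu> (space \<mu>) = \<infinity>" by (metis infinity_ennreal_def less_top)
      have "AE \<omega> in M. pm_count (N \<omega>) (\<phi> \<omega>) (space \<mu>) = \<infinity>"
        using assms(7) inf sets.top unfolding poisson_random_measure_def by blast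
      then have "AE \<omega> in M. Inf ((\<lambda>t. ereal (\<eta> \<omega> t)) ` K) > 0"
        using L AE_space
      proof eventually_elim
        case (elim \<omega>)
        show ?case
        proof (rule ccontr)
          assume neg: "\<not> Inf ((\<lambda>t. ereal (\<eta> \<omega> t)) ` K) > 0"
          have om: "\<omega> \<in> space M" using elim(3) .
          have Kne: "K \<noteq> {}" using neg by (auto simp: top_ereal_def)
          have cK: "compact K" using assms(2,9) by (metis compact_Int_closed inf_top.left_neutral)
          have cont: "continuous_on K (\<eta> \<omega>)"
            using assms(4) om continuous_on_subset by blast
          obtain t0 where t0: "t0 \<in> K" "\<And>y. y \<in> K \<Longrightarrow> \<eta> \<omega> t0 \<le> \<eta> \<omega> y"
            using continuous_attains_inf[OF cK Kne cont] by blast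
          have "ereal (\<eta> \<omega> t0) \<le> Inf ((\<lambda>t. ereal (\<eta> \<omega> t)) ` K)"
            by (rule INF_greatest) (use t0 in auto)
          moreover have "Inf ((\<lambda>t. ereal (\<eta> \<omega> t)) ` K) \<le> 0" using neg by (simp add: not_less)
          ultimately have "ereal (\<eta> \<omega> t0) \<le> 0" by (rule order.trans)
          then have le: "\<eta> \<omega> t0 \<le> 0" by simp
          have eq: "{i. enat i < N \<omega> \<and> \<phi> \<omega> i \<in> space \<mu>} = {i. enat i < N \<omega>}"
            using inC0 om sp by auto
          have "infinite {i. enat i < N \<omega>}"
            using elim(1) unfolding pm_count_def eq by (auto split: if_splits)
          moreover have "{i. enat i < N \<omega>} \<subseteq> {i. enat i < N \<omega> \<and>
                        (\<exists>t\<in>K. apply_bcontfun (\<phi> \<omega> i) t \<ge> \<eta> \<omega> t)}"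
          proof (rule subsetI)
            fix i assume "i \<in> {i. enat i < N \<omega>}"
            then have i: "enat i < N \<omega>" by simp
            have "\<eta> \<omega> t0 \<le> apply_bcontfun (\<phi> \<omega> i) t0"
              using le nonneg[OF om i, of t0] by linarith
            then show "i \<in> {i. enat i < N \<omega> \<and>
                        (\<exists>t\<in>K. apply_bcontfun (\<phi> \<omega> i) t \<ge> \<eta> \<omega> t)}" using t0(1) i by blast
          qed
          ultimately show False using elim(2) finite_subset by blast
        qed
      qed
      then show ?thesis using inf by simp
    qed
  next
    assume R: "emeasure \<mu> (space \<mu>) < \<infinity> \<or>
              (emeasure \<mu> (space \<mu>) = \<infinity> \<and>
               (AE \<omega> in M. Inf ((\<lambda>t. ereal (\<eta> \<omega> t)) ` K) > 0))"
    show "AE \<omega> in M. finite {i. enat i < N \<omega> \<and>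
                        (\<exists>t\<in>K. apply_bcontfun (\<phi> \<omega> i) t \<ge> \<eta> \<omega> t)}"
    proof (cases "emeasure \<mu> (space \<mu>) < \<infinity>")
      case True
      have "AE \<omega> in M. finite {i. enat i < N \<omega> \<and> \<phi> \<omega> i \<in> space \<mu>}"
        by (rule poisson_finite[OF assms(1,7) sets.top True])
      then show ?thesis using AE_space
      proof eventually_elim
        case (elim \<omega>)
        have om: "\<omega> \<in> space M" and f: "finite {i. enat i < N \<omega> \<and> \<phi> \<omega> i \<in> space \<mu>}"
          using elim by auto
        have eq: "{i. enat i < N \<omega> \<and> \<phi> \<omega> i \<in> space \<mu>} = {i. enat i < N \<omega>}"
          using inC0 om sp by auto
        show "finite {i. enat i < N \<omega> \<and>
                        (\<exists>t\<in>K. apply_bcontfun (\<phi> \<omega> i) t \<ge> \<eta> \<omega> t)}"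
          using f unfolding eq by (rule finite_subset[rotated]) blast
      qed
    next
      case False
      with R have AI: "AE \<omega> in M. Inf ((\<lambda>t. ereal (\<eta> \<omega> t)) ` K) > 0" by auto
      define A :: "nat \<Rightarrow> ('a \<Rightarrow>\<^sub>C real) set" where "A m = {f\<in>C0. norm f > 1 / real (Suc m)}" for m
      have As: "A m \<in> sets \<mu>" for m
      proof -
        have "A m = C0 \<inter> {f. norm f > 1 / real (Suc m)}" unfolding A_def by auto
        moreover have "{f::('a \<Rightarrow>\<^sub>C real). norm f > 1 / real (Suc m)} \<in> sets borel"
          by (rule borel_open) (intro open_Collect_less continuous_on_const continuous_on_norm_id)
        ultimately show ?thesis unfolding ss sets_restrict_space by blast
      qed
      have Af: "emeasure \<mu> (A m) < \<infinity>" for m unfolding A_def by (rule eps) simp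
      have "AE \<omega> in M. \<forall>m. finite {i. enat i < N \<omega> \<and> \<phi> \<omega> i \<in> A m}"
        using poisson_finite[OF assms(1,7) As Af] by (simp add: AE_all_countable)
      then show ?thesis using AI AE_space
      proof eventually_elim
        case (elim \<omega>)
        obtain e where e: "0 < ereal e" "ereal e < Inf ((\<lambda>t. ereal (\<eta> \<omega> t)) ` K)"
          using ereal_dense2[OF elim(2)] by blast
        obtain m where m: "1 / real (Suc m) < e"
        proof -
          have "0 < e" using e(1) by simp
          then obtain m where "inverse (real (Suc m)) < e" using reals_Archimedean by blast
          then show ?thesis using that by (simp add: inverse_eq_divide)
        qed
        have "{i. enat i < N \<omega> \<and> (\<exists>t\<in>K. apply_bcontfun (\<phi> \<omega> i) t \<ge> \<eta> \<omega> t)}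
              \<subseteq> {i. enat i < N \<omega> \<and> \<phi> \<omega> i \<in> A m}"
        proof safe
          fix i t assume i: "enat i < N \<omega>" and t: "t \<in> K" "\<eta> \<omega> t \<le> apply_bcontfun (\<phi> \<omega> i) t"
          have om: "\<omega> \<in> space M" using elim(3) .
          have "Inf ((\<lambda>t. ereal (\<eta> \<omega> t)) ` K) \<le> ereal (\<eta> \<omega> t)"
            using t(1) by (rule INF_lower)
          then have "ereal e < ereal (\<eta> \<omega> t)" using e(2) by (rule order.strict_trans2[rotated])
          then have "e < \<eta> \<omega> t" by simp
          moreover have "apply_bcontfun (\<phi> \<omega> i) t \<le> norm (\<phi> \<omega> i)"
            using norm_bounded[of "\<phi> \<omega> i" t] by simp
          ultimately show "\<phi> \<omega> i \<in> A m"
            unfolding A_def using inC0[OF om i] t(2) m by auto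
        qed
        then show ?case using elim(1) finite_subset by blast
      qed
    qed
  qed
qed

end
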